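(* For every integer $m\ge 0$ and every $n\ge 2$, $$l_n(x,m,s,q)=\big(x-(1-q)\,s\,q^{-m}D_q\big)\,l_{n-1}(x,m,s,q)+s\,q^{-m}\lambda_{n-2}(m,q)\,l_{n-2}(x,m,s,q),$$ where $\lambda_0(m,q)=\frac{1+q^m}{[m+1]}$ and $\lambda_n(m,q)=\frac{[n+1]\,[n+2m]}{[n+m]\,[n+m+1]}$ for $n\ge 1$, and $D_q$ is the $q$-derivative in $x$: $D_qf(x)=\frac{f(x)-f(qx)}{(1-q)x}$.
   Context: $q$ is an indeterminate; $[n]=\frac{1-q^n}{1-q}=1+q+\dots+q^{n-1}$, $[n]!=[1][2]\cdots[n]$, $[0]!=1$. For an integer $m\ge0$ and indeterminates $x,s$, $$l_n(x,m,s,q)=\sum_{k=0}^{\lfloor n/2\rfloor}s^k q^{\binom k2}\frac{[n]!}{[k]!\,[n-2k]!}\,\frac{[m+n-k-1]!}{[m+n-1]!}\,x^{n-2k}\quad (n\ge1),\qquad l_0(x,m,s,q)=1.$$ *)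

theory Defs
  imports Main
begin

definition qint :: "'a::field \<Rightarrow> nat \<Rightarrow> 'a" where
  "qint q n = (\<Sum>i<n. q ^ i)"

definition qfact :: "'a::field \<Rightarrow> nat \<Rightarrow> 'a" where
  "qfact q n = (\<Prod>i=1..n. qint q i)"

definition lpoly :: "nat \<Rightarrow> 'a::field \<Rightarrow> nat \<Rightarrow> 'a \<Rightarrow> 'a \<Rightarrow> 'a" where
  "lpoly n x m s q = (if n = 0 then 1 else
     (\<Sum>k\<le>n div 2. s ^ k * q ^ (k choose 2)
        * (qfact q n / (qfact q k * qfact q (n - 2*k)))
        * (qfact q (m + n - k - 1) / qfact q (m + n - 1))
        * x ^ (n - 2*k)))"

definition Dq :: "'a::field \<Rightarrow> ('a \<Rightarrow> 'a) \<Rightarrow> 'a \<Rightarrow> 'a" where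
  "Dq q f x = (f x - f (q * x)) / ((1 - q) * x)"

definition qlambda :: "nat \<Rightarrow> nat \<Rightarrow> 'a::field \<Rightarrow> 'a" where
  "qlambda n m q = (if n = 0 then (1 + q ^ m) / qint q (m + 1)
     else qint q (n + 1) * qint q (n + 2*m) / (qint q (n + m) * qint q (n + m + 1)))"

end

theory Submission
  imports Defs
begin

lemma qint_eq: "(q::'a::field) \<noteq> 1 \<Longrightarrow> qint q n = (1 - q^n)/(1-q)"
  unfolding qint_def by (simp add: sum_gp_strict)

lemma qint_nz: assumes "\<forall>k\<ge>1. (q::'a::field) ^ k \<noteq> 1" "n \<ge> 1" shows "qint q n \<noteq> 0"
proof -
  have "q \<noteq> 1" using assms(1) by (metis le_refl power_one_right)
  then show ?thesis using assms by (simp add: qint_eq)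
qed

lemma qfact_Suc: "qfact q (Suc n) = qfact q n * qint q (Suc n)"
  unfolding qfact_def by simp

lemma qfact_0[simp]: "qfact q 0 = 1" unfolding qfact_def by simp

lemma qfact_nz: assumes "\<forall>k\<ge>1. (q::'a::field) ^ k \<noteq> 1" shows "qfact q n \<noteq> 0"
  unfolding qfact_def using qint_nz[OF assms] by (simp add: prod_zero_iff)

definition cc :: "'a::field \<Rightarrow> nat \<Rightarrow> nat \<Rightarrow> nat \<Rightarrow> 'a" where
 "cc q m n k = (if 2*k \<le> n then q^(k choose 2) * (qfact q n / (qfact q k * qfact q (n-2*k)))
     * (qfact q (m+n-k-1) / qfact q (m+n-1)) else 0)"

lemma ch: "(K+1) choose 2 = (K choose 2) + K" by (simp add: numeral_2_eq_2)

lemma abs_core: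
  fixes q t w T1 im F1 F2 F3 F4 F5 A B C P Kk J1 J2 R1 R2 R1' R2' L qJ :: "'a::field"
  assumes "T1 = t*w" "R1' = R1" "R2' = R2" "1 - q*(q*qJ) = (1-q)*J2"
    and key: "w*C*P = w*J1*R2 - im*(1-q)*Kk*P*R2 + im*Kk*L"
    and nz: "F1 \<noteq> 0" "F2 \<noteq> 0" "F5 \<noteq> 0" "Kk \<noteq> 0" "J1 \<noteq> 0" "J2 \<noteq> 0" "R1 \<noteq> 0" "R2 \<noteq> 0"
  shows "T1*(F3*A*B*C)*(F4*P) / (F1*Kk*(F2*J1)*(F5*R1*R2)) =
     T1*(F3*A*B)*F4/(F1*Kk*F2*(F5*R1))
     - im*(t*(F3*A*B)*(F4*P))*(1-q*(q*qJ))/(F1*(F2*J1*J2)*(F5*R1))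
     + im*(B*L)*(t*(F3*A)*F4)/(R1'*R2'*(F1*(F2*J1)*F5))"
proof -
  define G where "G = t*F3*A*B*F4/(F1*Kk*F2*F5*R1)"
  have 1: "T1*(F3*A*B*C)*(F4*P) / (F1*Kk*(F2*J1)*(F5*R1*R2)) = G*(w*C*P/(J1*R2))"
    using assms(1) nz unfolding G_def by (simp add: field_simps)
  have 2: "T1*(F3*A*B)*F4/(F1*Kk*F2*(F5*R1)) = G*w"
    using assms(1) nz unfolding G_def by (simp add: field_simps)
  have 3: "im*(t*(F3*A*B)*(F4*P))*(1-q*(q*qJ))/(F1*(F2*J1*J2)*(F5*R1)) = G*(im*(1-q)*Kk*P/J1)"
    using nz unfolding G_def assms(4) by (simp add: field_simps)
  have 4: "im*(B*L)*(t*(F3*A)*F4)/(R1'*R2'*(F1*(F2*J1)*F5)) = G*(im*Kk*L/(J1*R2))"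
    using assms(2,3) nz unfolding G_def by (simp add: field_simps)
  have 5: "w*C*P/(J1*R2) = w - im*(1-q)*Kk*P/J1 + im*Kk*L/(J1*R2)"
    using key nz by (simp add: field_simps)
  show ?thesis unfolding 1 2 3 4 5 by (simp add: algebra_simps)
qed

lemma key_id:
  fixes q :: "'a::field"
  assumes "q \<noteq> 1" "q \<noteq> 0"
  shows "q^K * qint q (Suc (Suc (Suc (J + 2 * K)))) * qint q (Suc (K + (m + J)))
   = q^K * qint q (Suc J) * qint q (Suc (Suc (m + (J + 2 * K))))
     - inverse (q^m) * (1-q) * qint q (Suc K) * qint q (Suc (K + (m + J))) * qint q (Suc (Suc (m + (J + 2 * K))))
     + inverse (q^m) * qint q (Suc K) * qint q (Suc (J + 2 * K + 2 * m))"
proof -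
  define a where "a = q^J"
  define b where "b = q^K"
  define c where "c = q^m"
  define d where "d = 1 - q"
  have d: "d \<noteq> 0" using assms unfolding d_def by simp
  have cz: "c \<noteq> 0" using assms unfolding c_def by simp
  have poly: "c*b*(1-q^3*a*b^2)*(1-q*c*a*b) = c*b*(1-q*a)*(1-q^2*c*a*b^2) - (1-q*b)*(1-q*c*a*b)*(1-q^2*c*a*b^2)+(1-q*b)*(1-q*a*b^2*c^2)"
    by (simp add: algebra_simps power2_eq_square power3_eq_cube)
  have i1: "qint q (Suc (Suc (Suc (J + 2 * K)))) = (1-q^3*a*b^2)/d"
    unfolding a_def b_def d_def by (simp add: qint_eq[OF assms(1)] power_add power_mult power2_eq_square power3_eq_cube mult_ac)
  have i2: "qint q (Suc (K + (m + J))) = (1-q*c*a*b)/d"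
    unfolding a_def b_def c_def d_def by (simp add: qint_eq[OF assms(1)] power_add mult_ac)
  have i3: "qint q (Suc J) = (1-q*a)/d"
    unfolding a_def d_def by (simp add: qint_eq[OF assms(1)])
  have i4: "qint q (Suc (Suc (m + (J + 2 * K)))) = (1-q^2*c*a*b^2)/d"
    unfolding a_def b_def c_def d_def by (simp add: qint_eq[OF assms(1)] power_add power_mult power2_eq_square mult_ac)
  have i5: "qint q (Suc K) = (1-q*b)/d"
    unfolding b_def d_def by (simp add: qint_eq[OF assms(1)])
  have i6: "qint q (Suc (J + 2 * K + 2 * m)) = (1-q*a*b^2*c^2)/d"
    unfolding a_def b_def c_def d_def by (simp add: qint_eq[OF assms(1)] power_add power_mult power2_eq_square mult_ac)
  have L: "b * ((1-q^3*a*b^2)/d) * ((1-q*c*a*b)/d) = (c*b*(1-q^3*a*b^2)*(1-q*c*a*b))/(c*d^2)"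
    using d cz by (simp add: field_simps power2_eq_square)
  have R: "b * ((1-q*a)/d) * ((1-q^2*c*a*b^2)/d) - inverse c * d * ((1-q*b)/d) * ((1-q*c*a*b)/d) * ((1-q^2*c*a*b^2)/d)
      + inverse c * ((1-q*b)/d) * ((1-q*a*b^2*c^2)/d)
      = (c*b*(1-q*a)*(1-q^2*c*a*b^2) - (1-q*b)*(1-q*c*a*b)*(1-q^2*c*a*b^2)+(1-q*b)*(1-q*a*b^2*c^2))/(c*d^2)"
    using d cz by (simp add: field_simps power2_eq_square)
  show ?thesis
    unfolding i1 i2 i3 i4 i5 i6 b_def[symmetric] c_def[symmetric] d_def[symmetric] L R poly ..
qed

lemma core_Suc:
  fixes q :: "'a::field_char_0"
  assumes "q \<noteq> 0" "\<forall>k\<ge>1. q ^ k \<noteq> 1"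
  shows "cc q m (Suc J+2*K+2) (K+1) = cc q m (Suc J+2*K+1) (K+1) - inverse (q^m) * cc q m (Suc J+2*K+1) K * (1 - q^(Suc J+1))
     + inverse (q^m) * qlambda (Suc J + 2*K) m q * cc q m (Suc J+2*K) K"
proof -
  have q1: "q \<noteq> 1" using assms(2) by (metis le_refl power_one_right)
  note nz = qfact_nz[OF assms(2)]
  have qi: "qint q (Suc n) \<noteq> 0" for n using qint_nz[OF assms(2)] by simp
  have q1n: "1 - q \<noteq> 0" using q1 by simp
  have e1: "m + (Suc J + 2 * K + 2) - (K + 1) - 1 = Suc (m+J+K)" by simp
  have e2: "m + (Suc J + 2 * K + 2) - 1 = Suc (Suc (m+J+2*K))" by simp
  have e3: "m + (Suc J + 2 * K + 1) - (K + 1) - 1 = m+J+K" by simp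
  have e4: "m + (Suc J + 2 * K + 1) - 1 = Suc (m+J+2*K)" by simp
  have e5: "m + (Suc J + 2 * K + 1) - K - 1 = Suc (m+J+K)" by simp
  have e6: "m + (Suc J + 2 * K) - K - 1 = m+J+K" by simp
  have e7: "m + (Suc J + 2 * K) - 1 = m+J+2*K" by simp
  have e8: "Suc J + 2 * K + 2 - 2 * (K + 1) = Suc J" by simp
  have e9: "Suc J + 2 * K + 1 - 2 * (K + 1) = J" by simp
  have e10: "Suc J + 2 * K + 1 - 2 * K = Suc (Suc J)" by simp
  have e11: "Suc J + 2 * K - 2 * K = Suc J" by simp
  have e12: "Suc J + 2 * K + 2 = Suc (Suc (Suc (J+2*K)))" by simp
  have e13: "Suc J + 2 * K + 1 = Suc (Suc (J+2*K))" by simp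
  have e14: "Suc J + 2 * K = Suc (J+2*K)" by simp
  show ?thesis
    unfolding cc_def qlambda_def
    apply (simp only: e1 e2 e3 e4 e5 e6 e7 e8 e9 e10 e11 e12 e13 e14 ch)
    apply (simp add: qfact_Suc)
    apply (rule abs_core[where t="q^(K choose 2)" and w="q^K"])
    apply (simp add: power_add)
    apply (simp add: ac_simps)
    apply (simp add: ac_simps)
    apply (simp add: qint_eq[OF q1])
    using key_id[OF q1 assms(1), of K J m] apply (simp add: ac_simps)
    apply (simp_all add: nz qi)
    done
qed

lemma abs_core0:
  fixes q t w T1 im F1 F3 F4 F5 A1 A2 A3 A4 A3' P Kk1 Kk2 R1 R2 R3 M2 M3 L one :: "'a::field"
  assumes "T1 = t*w" "A3' = A3" "M2 = R2" "M3 = R3" "one = 1"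
    and key: "w*A4*P = Kk2*(im*L - im*(1-q)*P*R3)"
    and nz: "F1 \<noteq> 0" "F5 \<noteq> 0" "Kk1 \<noteq> 0" "Kk2 \<noteq> 0" "R1 \<noteq> 0" "R2 \<noteq> 0" "R3 \<noteq> 0"
  shows "T1*(F3*A1*A2*A3*A4/(F1*Kk1*Kk2*1))*(F4*P/(F5*R1*R2*R3)) = 0 - im*(t*(F3*A1*A2*A3/(F1*Kk1*(1*one)))*(F4*P/(F5*R1*R2)))*(1-q^(0+1)) + im*(A3'*L/(M2*M3))*(t*(F3*A1*A2/(F1*Kk1*1))*(F4/(F5*R1)))"
proof -
  define G where "G = t*F3*A1*A2*A3*F4/(F1*Kk1*F5*R1)"
  have 1: "T1*(F3*A1*A2*A3*A4/(F1*Kk1*Kk2*1))*(F4*P/(F5*R1*R2*R3)) = G*(w*A4*P/(Kk2*R2*R3))"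
    using nz unfolding G_def assms(1) by (simp add: field_simps)
  have 2: "im*(t*(F3*A1*A2*A3/(F1*Kk1*(1*one)))*(F4*P/(F5*R1*R2)))*(1-q^(0+1)) = G*(im*(1-q)*P/R2)"
    using nz unfolding G_def assms(5) by (simp add: field_simps)
  have 3: "im*(A3'*L/(M2*M3))*(t*(F3*A1*A2/(F1*Kk1*1))*(F4/(F5*R1))) = G*(im*L/(R2*R3))"
    using nz unfolding G_def assms(2,3,4) by (simp add: field_simps)
  have 4: "w*A4*P/(Kk2*R2*R3) = - (im*(1-q)*P/R2) + im*L/(R2*R3)"
    using key nz by (simp add: field_simps)
  show ?thesis unfolding 1 2 3 4 by (simp add: algebra_simps)
qed

lemma key0:
  fixes q :: "'a::field"
  assumes "q \<noteq> 1" "q \<noteq> 0"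
  shows "q^Suc K * qint q (Suc (Suc (Suc (Suc (2 * K))))) * qint q (Suc (m + K))
   = qint q (Suc (Suc K)) * (inverse (q^m) * qint q (Suc (Suc (2 * K)) + 2 * m) - inverse (q^m) * (1-q) * qint q (Suc (m + K)) * qint q (Suc (Suc (Suc (m + 2 * K)))))"
proof -
  define b where "b = q^K"
  define c where "c = q^m"
  define d where "d = 1 - q"
  have d: "d \<noteq> 0" using assms unfolding d_def by simp
  have cz: "c \<noteq> 0" using assms unfolding c_def by simp
  have poly: "c*q*b*(1-q^4*b^2)*(1-q*c*b) = (1-q^2*b)*((1-q^2*b^2*c^2)-(1-q^3*c*b^2)*(1-q*c*b))"
    by (simp add: algebra_simps power2_eq_square power3_eq_cube power4_eq_xxxx)
  have i1: "qint q (Suc (Suc (Suc (Suc (2 * K))))) = (1-q^4*b^2)/d"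
    unfolding b_def d_def by (simp add: qint_eq[OF assms(1)] power_add power_mult power2_eq_square power4_eq_xxxx mult_ac)
  have i2: "qint q (Suc (m + K)) = (1-q*c*b)/d"
    unfolding b_def c_def d_def by (simp add: qint_eq[OF assms(1)] power_add mult_ac)
  have i3: "qint q (Suc (Suc K)) = (1-q^2*b)/d"
    unfolding b_def d_def by (simp add: qint_eq[OF assms(1)] power2_eq_square)
  have i4: "qint q (Suc (Suc (2 * K)) + 2 * m) = (1-q^2*b^2*c^2)/d"
    unfolding b_def c_def d_def by (simp add: qint_eq[OF assms(1)] power_add power_mult power2_eq_square mult_ac)
  have i5: "qint q (Suc (Suc (Suc (m + 2 * K)))) = (1-q^3*c*b^2)/d"
    unfolding b_def c_def d_def by (simp add: qint_eq[OF assms(1)] power_add power_mult power2_eq_square power3_eq_cube mult_ac)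
  have qs: "q^Suc K = q*b" unfolding b_def by simp
  have L: "q*b * ((1-q^4*b^2)/d) * ((1-q*c*b)/d) = (c*q*b*(1-q^4*b^2)*(1-q*c*b))/(c*d^2)"
    using d cz by (simp add: field_simps power2_eq_square)
  have R: "(1-q^2*b)/d * (inverse c * ((1-q^2*b^2*c^2)/d) - inverse c * d * ((1-q*c*b)/d) * ((1-q^3*c*b^2)/d))
      = ((1-q^2*b)*((1-q^2*b^2*c^2)-(1-q^3*c*b^2)*(1-q*c*b)))/(c*d^2)"
    using d cz by (simp add: field_simps power2_eq_square)
  show ?thesis
    unfolding i1 i2 i3 i4 i5 qs c_def[symmetric] d_def[symmetric] L R poly ..
qed

lemma core_0S:
  fixes q :: "'a::field_char_0"
  assumes "q \<noteq> 0" "\<forall>k\<ge>1. q ^ k \<noteq> 1"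
  shows "cc q m (2*K+4) (K+2) = cc q m (2*K+3) (K+2) - inverse (q^m) * cc q m (2*K+3) (K+1) * (1 - q^(0+1))
     + inverse (q^m) * qlambda (2*K+2) m q * cc q m (2*K+2) (K+1)"
proof -
  have q1: "q \<noteq> 1" using assms(2) by (metis le_refl power_one_right)
  note nz = qfact_nz[OF assms(2)]
  have qi: "qint q (Suc n) \<noteq> 0" for n using qint_nz[OF assms(2)] by simp
  have e: "m + (2*K+4) - (K+2) - 1 = Suc(m+K)"
     "m + (2*K+4) - 1 = Suc (Suc (Suc (m+2*K)))"
     "2*K+4 - 2*(K+2) = 0"
     "m + (2*K+3) - (K+1) - 1 = Suc (m+K)"
     "m + (2*K+3) - 1 = Suc (Suc (m+2*K))"
     "2*K+3 - 2*(K+1) = Suc 0"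
     "m + (2*K+2) - (K+1) - 1 = m+K"
     "m + (2*K+2) - 1 = Suc (m+2*K)"
     "2*K+2 - 2*(K+1) = 0"
     "(2 * (K + 2) \<le> 2 * K + 3) = False" "(2 * (K+1) \<le> 2 * K + 3) = True"
     "(2 * (K+1) \<le> 2 * K + 2) = True" "(2 * (K + 2) \<le> 2 * K + 4) = True"
     "(2*K+2 = 0) = False"
     by simp_all
  have ch3: "(K+2) choose 2 = ((K+1) choose 2) + (K+1)"
     using ch[of "K+1"] by simp
  have e2: "2*K+4 = Suc(Suc(Suc(Suc(2*K))))" "2*K+3 = Suc(Suc(Suc(2*K)))" "2*K+2 = Suc(Suc(2*K))"
     "K+2 = Suc (Suc K)" "K+1 = Suc K" by simp_all
  show ?thesis
    unfolding cc_def qlambda_def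
    apply (simp only: e ch3 if_True if_False)
    apply (simp only: e2 qfact_Suc qfact_0)
    apply (rule abs_core0[where t="q^(Suc K choose 2)" and w="q^(Suc K)"])
    apply (simp add: power_add)
    apply (simp add: ac_simps)
    apply (simp add: ac_simps)
    apply (simp add: ac_simps)
    apply (simp add: qint_def)
    using key0[OF q1 assms(1), of K m] apply (simp add: ac_simps)
    apply (simp_all add: nz qi)
    done
qed
lemma core_00:
  fixes q :: "'a::field_char_0"
  assumes "q \<noteq> 0" "\<forall>k\<ge>1. q ^ k \<noteq> 1"
  shows "cc q m 2 1 = cc q m 1 1 - inverse (q^m) * cc q m 1 0 * (1 - q^(0+1)) + inverse (q^m) * qlambda 0 m q * cc q m 0 0"
proof -
  have q1: "q \<noteq> 1" using assms(2) by (metis le_refl power_one_right)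
  note nz = qfact_nz[OF assms(2)]
  have qi: "qint q (Suc n) \<noteq> 0" for n using qint_nz[OF assms(2)] by simp
  have a: "cc q m 2 1 = qint q 2 / qint q (Suc m)"
    unfolding cc_def using nz qi by (simp add: numeral_2_eq_2 qfact_Suc)
  have b: "cc q m 1 1 = 0" "cc q m 1 0 = 1" "cc q m 0 0 = 1"
    unfolding cc_def using nz qi[of 0] by (simp_all add: qfact_Suc numeral_2_eq_2)
  have c: "qlambda 0 m q = (1 + q^m) / qint q (Suc m)" unfolding qlambda_def by simp
  have d: "qint q 2 = 1 + q" unfolding qint_def by (simp add: numeral_2_eq_2)
  have m: "q^m \<noteq> 0" using assms by simp
  have d1: "1 - q \<noteq> 0" using q1 by simp
  have e: "1 - q * q^m \<noteq> 0" using assms(2) by (metis power_Suc le_add1 plus_1_eq_Suc right_minus_eq)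
  define cm where "cm = q^m"
  have qs: "q^Suc m = q * cm" unfolding cm_def by simp
  have L: "(1+q) / ((1 - q*cm)/(1-q)) = (1+q)*(1-q)/(1-q*cm)" using d1 e unfolding cm_def by simp
  have R: "0 - inverse cm * 1 * (1 - q^(0+1)) + inverse cm * ((1+cm)/((1-q*cm)/(1-q))) * 1
     = (1-q) * ((1+cm) - (1-q*cm)) / (cm * (1-q*cm))"
    using m d1 e unfolding cm_def by (simp add: field_simps)
  have R2: "(1-q) * ((1+cm) - (1-q*cm)) / (cm * (1-q*cm)) = (1+q)*(1-q)/(1-q*cm)"
  proof -
    have "(1+cm) - (1-q*cm) = cm*(1+q)" by (simp add: algebra_simps)
    moreover have "cm \<noteq> 0" using m unfolding cm_def .
    moreover have "1 - q*cm \<noteq> 0" using e unfolding cm_def .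
    ultimately show ?thesis by (simp add: field_simps)
  qed
  show ?thesis unfolding a b c d unfolding qint_eq[OF q1] qs cm_def[symmetric] L R R2 ..
qed

lemma coreW:
  fixes q :: "'a::field_char_0"
  assumes q0: "q \<noteq> 0" and qk: "\<forall>k\<ge>1. q ^ k \<noteq> 1" and jN: "2*j \<le> N"
  shows "cc q m (N+2) (Suc j) = cc q m (N+1) (Suc j) - inverse (q^m) * cc q m (N+1) j * (1 - q^(N+1-2*j))
     + inverse (q^m) * qlambda N m q * cc q m N j"
proof (cases "N = 2*j")
  case True
  show ?thesis
  proof (cases j)
    case 0
    have N0: "N = 0" using True 0 by simp
    have t0: "N+1-2*j = 0+1" using N0 0 by simp
    have t: "N+2 = 2" "N+1 = 1" "Suc j = 1" using N0 0 by simp_all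
    show ?thesis unfolding t0 unfolding t unfolding N0 0 by (rule core_00[OF q0 qk])
  next
    case (Suc K)
    have "N = 2*K+2" using True Suc by simp
    have t0: "N+1-2*j = 0+1" using Suc True by simp
    have t: "N+2 = 2*K+4" "N+1 = 2*K+3" "Suc j = K+2" using Suc True by simp_all
    show ?thesis unfolding t0 unfolding t unfolding \<open>j = Suc K\<close> Suc_eq_plus1 \<open>N = 2*K+2\<close> by (rule core_0S[OF q0 qk])
  qed
next
  case False
  then obtain J where N: "N = Suc J + 2*j" proof -
    have "2*j < N" using jN False by simp
    then have "N = Suc (N - 2*j - 1) + 2*j" by simp
    then show ?thesis using that by blast
  qed
  show ?thesis using core_Suc[OF q0 qk, of m J j] unfolding N by simp
qed

lemma zero_choose2[simp]: "(0::nat) choose 2 = 0" by (rule binomial_eq_0) simp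

lemma lpoly_sum:
  fixes q :: "'a::field"
  assumes qk: "\<forall>k\<ge>1. q ^ k \<noteq> 1" and R: "n div 2 \<le> R"
  shows "lpoly n x m s q = (\<Sum>k\<le>R. s^k * cc q m n k * x^(n-2*k))"
proof -
  have "(\<Sum>k\<le>R. s^k * cc q m n k * x^(n-2*k)) = (\<Sum>k\<le>n div 2. s^k * cc q m n k * x^(n-2*k))"
  proof (rule sum.mono_neutral_right)
    show "\<forall>i\<in>{..R} - {..n div 2}. s ^ i * cc q m n i * x ^ (n - 2 * i) = 0"
      unfolding cc_def by auto
  qed (use R in auto)
  also have "\<dots> = lpoly n x m s q"
  proof (cases "n = 0")
    case True
    then show ?thesis unfolding cc_def lpoly_def using qfact_nz[OF qk] by simp
  next
    case False
    have "2*k \<le> n" if "k \<le> n div 2" for k using that by linarith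
    then show ?thesis unfolding cc_def lpoly_def using False by (simp add: mult.assoc)
  qed
  finally show ?thesis ..
qed

lemma termwise:
  fixes q :: "'a::field_char_0"
  assumes q0: "q \<noteq> 0" and qk: "\<forall>k\<ge>1. q ^ k \<noteq> 1" and x0: "x \<noteq> 0"
  shows "s^k*cc q m (N+2) k*x^(N+2-2*k) = s^k*cc q m (N+1) k*x^(N+1-2*k)*x
    - (case k of 0 \<Rightarrow> 0 | Suc j \<Rightarrow> s^(Suc j)*inverse(q^m)*cc q m (N+1) j*(1-q^(N+1-2*j))*x^(N+1-2*j)/x)
    + (case k of 0 \<Rightarrow> 0 | Suc j \<Rightarrow> s^(Suc j)*inverse(q^m)*qlambda N m q*cc q m N j*x^(N-2*j))"
proof (cases k)
  case 0
  have "cc q m (N+2) 0 = 1" "cc q m (N+1) 0 = 1" unfolding cc_def using qfact_nz[OF qk] by simp_all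
  then show ?thesis using 0 by simp
next
  case (Suc j)
  show ?thesis
  proof (cases "2*j \<le> N")
    case True
    note c = coreW[OF q0 qk True, of m]
    have p1: "cc q m (N+1) (Suc j)*x^(N+1-2*Suc j)*x = cc q m (N+1) (Suc j)*x^(N-2*j)"
    proof (cases "N = 2*j")
      case True
      then show ?thesis unfolding cc_def by simp
    next
      case False
      then have "N+1-2*Suc j = N - 2*j - 1" "N - 2*j = Suc (N-2*j-1)" using True by simp_all
      then show ?thesis by (metis mult.assoc power_Suc2)
    qed
    have p2: "x^(N+1-2*j)/x = x^(N-2*j)" using True x0 by (simp add: Suc_diff_le)
    have p3: "N+2-2*Suc j = N-2*j" by simp
    have e: "s^(Suc j)*inverse(q^m)*cc q m (N+1) j*(1-q^(N+1-2*j))*x^(N+1-2*j)/x = s^(Suc j)*inverse(q^m)*cc q m (N+1) j*(1-q^(N+1-2*j))*x^(N-2*j)"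
      using p2 by (metis times_divide_eq_right)
    have f: "s^Suc j*cc q m (N+1) (Suc j)*x^(N+1-2*Suc j)*x = s^Suc j*cc q m (N+1) (Suc j)*x^(N-2*j)"
      using p1 by (metis mult.assoc)
    show ?thesis unfolding Suc nat.case e p3 f unfolding c by (simp add: algebra_simps)
  next
    case False
    have z1: "cc q m (N+2) (Suc j) = 0" "cc q m (N+1) (Suc j) = 0" "cc q m N j = 0"
      using False unfolding cc_def by auto
    have z2: "cc q m (N+1) j * (1-q^(N+1-2*j)) = 0"
    proof (cases "2*j \<le> N+1")
      case True
      then have "N+1-2*j = 0" using False by simp
      then show ?thesis by simp
    next
      case False
      then show ?thesis unfolding cc_def by simp
    qed
    have "s^(Suc j)*inverse(q^m)*cc q m (N+1) j*(1-q^(N+1-2*j))*x^(N+1-2*j)/x = 0"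
      using z2 by (simp add: mult.assoc mult.left_commute[of _ "cc q m (N+1) j"]) blast
    then show ?thesis using Suc z1 by simp
  qed
qed

theorem mainTheorem8:
  fixes x s q :: "'a::field_char_0" and m n :: nat
  assumes "n \<ge> 2"
    and "q \<noteq> 0" and "q \<noteq> 1" and "\<forall>k\<ge>1. q ^ k \<noteq> 1"
    and "x \<noteq> 0"
  shows "lpoly n x m s q =
           x * lpoly (n - 1) x m s q
           - (1 - q) * s * inverse (q ^ m) * Dq q (\<lambda>y. lpoly (n - 1) y m s q) x
           + s * inverse (q ^ m) * qlambda (n - 2) m q * lpoly (n - 2) x m s q"
proof -
  obtain N where n: "n = N + 2" using assms(1) by (metis le_add_diff_inverse2)
  have n1: "n - 1 = N + 1" "n - 2 = N" using n by simp_all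
  note qk = assms(4)
  define A where "A k = s^k*cc q m (N+1) k*x^(N+1-2*k)*x" for k
  define B where "B k = (case k of 0 \<Rightarrow> 0 | Suc j \<Rightarrow> s^(Suc j)*inverse(q^m)*cc q m (N+1) j*(1-q^(N+1-2*j))*x^(N+1-2*j)/x)" for k
  define C where "C k = (case k of 0 \<Rightarrow> 0 | Suc j \<Rightarrow> s^(Suc j)*inverse(q^m)*qlambda N m q*cc q m N j*x^(N-2*j))" for k
  have S0: "lpoly (N+2) x m s q = (\<Sum>k\<le>N+2. s^k * cc q m (N+2) k * x^(N+2-2*k))"
    by (rule lpoly_sum[OF qk]) simp
  have S1: "x * lpoly (N+1) x m s q = (\<Sum>k\<le>N+2. A k)"
  proof -
    have L: "lpoly (N+1) x m s q = (\<Sum>k\<le>N+2. s^k * cc q m (N+1) k * x^(N+1-2*k))"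
      by (rule lpoly_sum[OF qk]) simp
    show ?thesis unfolding L A_def sum_distrib_left by (rule sum.cong) (simp_all add: mult_ac)
  qed
  have SD: "lpoly (N+1) y m s q = (\<Sum>k\<le>N+1. s^k * cc q m (N+1) k * y^(N+1-2*k))" for y
    by (rule lpoly_sum[OF qk]) simp
  have d1: "1 - q \<noteq> 0" using assms(3) by simp
  have SB: "(1 - q) * s * inverse (q ^ m) * Dq q (\<lambda>y. lpoly (N+1) y m s q) x = (\<Sum>k\<le>N+1. B (Suc k))"
  proof -
    have "(1 - q) * s * inverse (q ^ m) * Dq q (\<lambda>y. lpoly (N+1) y m s q) x
       = (\<Sum>k\<le>N+1. (1 - q) * s * inverse (q ^ m) * ((s^k * cc q m (N+1) k * x^(N+1-2*k) - s^k * cc q m (N+1) k * (q*x)^(N+1-2*k)) / ((1-q)*x)))"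
      unfolding Dq_def SD sum_subtractf[symmetric] sum_divide_distrib sum_distrib_left ..
    also have "\<dots> = (\<Sum>k\<le>N+1. B (Suc k))"
    proof (rule sum.cong[OF refl])
      fix k
      show "(1 - q) * s * inverse (q ^ m) * ((s^k * cc q m (N+1) k * x^(N+1-2*k) - s^k * cc q m (N+1) k * (q*x)^(N+1-2*k)) / ((1-q)*x)) = B (Suc k)"
      proof -
        have g: "(1-q)*a*((b - b*c)/((1-q)*x)) = a*(b*(1-c))/x" for a b c :: 'a
          using d1 assms(5) by (simp add: field_simps)
        have p: "s^k * cc q m (N+1) k * (q*x)^(N+1-2*k) = (s^k * cc q m (N+1) k * x^(N+1-2*k)) * q^(N+1-2*k)"
          by (simp add: power_mult_distrib mult_ac)
        have "(1 - q) * s * inverse (q ^ m) * ((s^k * cc q m (N+1) k * x^(N+1-2*k) - s^k * cc q m (N+1) k * (q*x)^(N+1-2*k)) / ((1-q)*x))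
           = (1 - q) * (s * inverse (q ^ m)) * ((s^k * cc q m (N+1) k * x^(N+1-2*k) - (s^k * cc q m (N+1) k * x^(N+1-2*k)) * q^(N+1-2*k)) / ((1-q)*x))"
          unfolding p by (simp only: mult.assoc)
        also have "\<dots> = s * inverse (q ^ m) * ((s^k * cc q m (N+1) k * x^(N+1-2*k)) * (1 - q^(N+1-2*k))) / x"
          by (rule g)
        also have "\<dots> = B (Suc k)" unfolding B_def by (simp add: mult_ac)
        finally show ?thesis .
      qed
    qed
    finally show ?thesis .
  qed
  have SC: "s * inverse (q ^ m) * qlambda N m q * lpoly N x m s q = (\<Sum>k\<le>N+1. C (Suc k))"
  proof -
    have L: "lpoly N x m s q = (\<Sum>k\<le>N+1. s^k * cc q m N k * x^(N-2*k))"
      by (rule lpoly_sum[OF qk]) simp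
    show ?thesis unfolding L C_def sum_distrib_left by (rule sum.cong) (simp_all add: mult_ac)
  qed
  have shB: "(\<Sum>k\<le>N+1. B (Suc k)) = (\<Sum>k\<le>N+2. B k)"
    using sum.atMost_Suc_shift[of B "N+1"] by (simp add: B_def)
  have shC: "(\<Sum>k\<le>N+1. C (Suc k)) = (\<Sum>k\<le>N+2. C k)"
    using sum.atMost_Suc_shift[of C "N+1"] by (simp add: C_def)
  have T: "(\<Sum>k\<le>N+2. s^k * cc q m (N+2) k * x^(N+2-2*k)) = (\<Sum>k\<le>N+2. A k - B k + C k)"
    by (rule sum.cong[OF refl]) (unfold A_def B_def C_def, rule termwise[OF assms(2) qk assms(5)])
  show ?thesis unfolding n1 unfolding n S0 S1 SB SC shB shC T
    by (simp add: sum.distrib sum_subtractf)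
qed
end
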